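(* Let $R$ be a semistandard cylindric tableau and $S$ a set of boxes satisfying the input conditions of full multi-insertion, and perform $\operatorname{FullMulti}(R,S)$. Then for every row $r$, the list of entries removed from row $r$ (either removed from boxes of $S$ in the initial phase, or displaced by a bump), in the order in which they were removed, is weakly increasing.
   Context: Fix integers $n>k\ge1$. A cylindric partition is a weakly decreasing integer sequence $(\lambda_m)_{m\in\mathbb Z}$ with $\lambda_m=\lambda_{m+k}+n-k$. A point $(x,y)\in\mathbb Z^2$ lies in $\lambda$ if $y\le\lambda_x$. Boxes are classes of points modulo translation by multiples of $(-k,n-k)$; row $x$ of the cylinder is the image of plane row $x$ (indexed mod $k$), column $y$ the image of plane column $y$; within a row boxes are ordered left to right by $y$-coordinates of representatives in a fixed plane row. $\mu\subseteq\lambda$ means $\mu_m\le\lambda_m$ for all $m$. A (semistandard cylindric) tableau of shape $\lambda/\mu$ is a map from the boxes in $\lambda$ but not $\mu$ to a totally ordered alphabet, weakly increasing along plane rows and strictly increasing down plane columns; its shapes are part of its data. Full multi-insertion $\operatorname{FullMulti}(R,S)$: input a tableau $R$ with outer shape $\lambda$, inner shape $\mu$, and a set $S$ of boxes not in $\mu$, no two in the same column, such that $\mu$ plus $S$ is a cylindric partition. Choose an integer $r_0$. For $h=r_0,\dots,r_0+k-1$, go through the boxes of $S$ in row $h$ from left to right: if the box is in $\lambda$, remove its entry $x$ and append $(x,h+1)$ to a queue; otherwise add the box to $\lambda$. All boxes of $S$ are added to the inner shape. Then, while the current queue $q$ is nonempty: start an empty queue $q'$; remove pairs $(x,s)$ from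 the front of $q$ one at a time; if $x$ is $\ge$ every entry in row $s$, put $x$ into the leftmost box of row $s$ not in the current outer shape and add it to the outer shape; otherwise replace the leftmost entry $x'$ of row $s$ greater than $x$ by $x$ (a bump displacing $x'$) and append $(x',s+1)$ to $q'$; when $q$ is exhausted set $q:=q'$. All actions are performed one at a time, giving a time order. *)

theory Defs
  imports Main
begin

(* Cylinder for fixed n > k >= 1: plane points (x,y) in Z^2, boxes = classes modulo
   translation by multiples of (-k, n-k).  Shapes are represented by their plane
   boundary functions lam :: int => int (point (x,y) lies in lam iff y <= lam x).
   Row x is the plane row x (cylinder row = x mod k); "down" means increasing x. *)

definition cylindric :: "nat \<Rightarrow> nat \<Rightarrow> (int \<Rightarrow> int) \<Rightarrow> bool" where
  "cylindric n k lam \<longleftrightarrow>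
     (\<forall>a b. a \<le> b \<longrightarrow> lam b \<le> lam a) \<and>
     (\<forall>m. lam m = lam (m + int k) + (int n - int k))"

definition in_shape :: "(int \<Rightarrow> int) \<Rightarrow> int \<times> int \<Rightarrow> bool" where
  "in_shape lam p \<longleftrightarrow> snd p \<le> lam (fst p)"

definition in_skew :: "(int \<Rightarrow> int) \<Rightarrow> (int \<Rightarrow> int) \<Rightarrow> int \<times> int \<Rightarrow> bool" where
  "in_skew lam mu p \<longleftrightarrow> in_shape lam p \<and> \<not> in_shape mu p"

definition same_box :: "nat \<Rightarrow> nat \<Rightarrow> int \<times> int \<Rightarrow> int \<times> int \<Rightarrow> bool" where
  "same_box n k p q \<longleftrightarrow> (\<exists>t::int. q = (fst p - t * int k, snd p + t * (int n - int k)))"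

definition same_column :: "nat \<Rightarrow> nat \<Rightarrow> int \<times> int \<Rightarrow> int \<times> int \<Rightarrow> bool" where
  "same_column n k p q \<longleftrightarrow> (\<exists>t::int. snd q + t * (int n - int k) = snd p)"

text \<open>Semistandard cylindric tableau of shape lam/mu; entries T given on plane points,
  only the values on the skew shape matter, and they must be constant on boxes.\<close>
definition cyl_tableau ::
  "nat \<Rightarrow> nat \<Rightarrow> (int \<Rightarrow> int) \<Rightarrow> (int \<Rightarrow> int) \<Rightarrow> (int \<times> int \<Rightarrow> 'a::linorder) \<Rightarrow> bool" where
  "cyl_tableau n k lam mu T \<longleftrightarrow>
     cylindric n k lam \<and> cylindric n k mu \<and> (\<forall>m. mu m \<le> lam m) \<and>
     (\<forall>p q. in_skew lam mu p \<longrightarrow> same_box n k p q \<longrightarrow> T q = T p) \<and>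
     (\<forall>x y. in_skew lam mu (x, y) \<and> in_skew lam mu (x, y + 1) \<longrightarrow> T (x, y) \<le> T (x, y + 1)) \<and>
     (\<forall>x y. in_skew lam mu (x, y) \<and> in_skew lam mu (x + 1, y) \<longrightarrow> T (x, y) < T (x + 1, y))"

text \<open>Input conditions on S (a set of plane points closed under the translation, i.e. a
  set of boxes): boxes not in mu, no two in the same column, and mu plus S is the
  cylindric partition nu.\<close>
definition fullmulti_input ::
  "nat \<Rightarrow> nat \<Rightarrow> (int \<Rightarrow> int) \<Rightarrow> (int \<times> int) set \<Rightarrow> (int \<Rightarrow> int) \<Rightarrow> bool" where
  "fullmulti_input n k mu S nu \<longleftrightarrow>
     (\<forall>p q. p \<in> S \<longrightarrow> same_box n k p q \<longrightarrow> q \<in> S) \<and>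
     (\<forall>p\<in>S. \<not> in_shape mu p) \<and>
     (\<forall>p\<in>S. \<forall>q\<in>S. same_column n k p q \<longrightarrow> same_box n k p q) \<and>
     cylindric n k nu \<and>
     (\<forall>p. in_shape nu p \<longleftrightarrow> in_shape mu p \<or> p \<in> S)"

text \<open>Periodic updates: change a whole box class / a whole row class.\<close>
definition set_row :: "nat \<Rightarrow> nat \<Rightarrow> (int \<Rightarrow> int) \<Rightarrow> int \<Rightarrow> int \<Rightarrow> (int \<Rightarrow> int)" where
  "set_row n k lam h v = (\<lambda>x. if (h - x) mod int k = 0
                               then v + ((h - x) div int k) * (int n - int k) else lam x)"

definition set_ent :: "nat \<Rightarrow> nat \<Rightarrow> (int \<times> int \<Rightarrow> 'a) \<Rightarrow> int \<times> int \<Rightarrow> 'a \<Rightarrow> (int \<times> int \<Rightarrow> 'a)" where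
  "set_ent n k T p v = (\<lambda>(x, z). if same_box n k p (x, z) then v else T (x, z))"

record 'a fm_state =
  outer :: "int \<Rightarrow> int"
  inner :: "int \<Rightarrow> int"
  ent :: "int \<times> int \<Rightarrow> 'a"
  pend :: "(int \<times> int) list"      (* boxes of S still to be processed in the initial phase *)
  queue :: "('a \<times> int) list"
  nqueue :: "('a \<times> int) list"
  removed :: "(int \<times> 'a) list"    (* log of removals (plane row, entry), in time order *)

text \<open>One action of FullMulti (the identity once the algorithm has finished).\<close>
definition fm_step :: "nat \<Rightarrow> nat \<Rightarrow> 'a::linorder fm_state \<Rightarrow> 'a fm_state" where
  "fm_step n k st =
    (case pend st of
       (h, y) # rest \<Rightarrow>
         (if y \<le> outer st h then
            st\<lparr>pend := rest, queue := queue st @ [(ent st (h, y), h + 1)],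
               removed := removed st @ [(h, ent st (h, y))]\<rparr>
          else st\<lparr>pend := rest, outer := set_row n k (outer st) h (max (outer st h) y)\<rparr>)
     | [] \<Rightarrow>
       (case queue st of
          (x, s) # rest \<Rightarrow>
            (let row = {y. inner st s < y \<and> y \<le> outer st s} in
             if (\<forall>y\<in>row. ent st (s, y) \<le> x) then
               st\<lparr>queue := rest,
                  outer := set_row n k (outer st) s (outer st s + 1),
                  ent := set_ent n k (ent st) (s, outer st s + 1) x\<rparr>
             else
               (let y0 = (LEAST y. y \<in> row \<and> x < ent st (s, y)); x' = ent st (s, y0) in
                st\<lparr>queue := rest, ent := set_ent n k (ent st) (s, y0) x,
                   nqueue := nqueue st @ [(x', s + 1)],
                   removed := removed st @ [(s, x')]\<rparr>))
        | [] \<Rightarrow> (if nqueue st = [] then st else st\<lparr>queue := nqueue st, nqueue := []\<rparr>)))"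

text \<open>Initial state for FullMulti(R,S) with starting row r0; the inner shape is already
  mu plus S = nu, and the boxes of S are listed row by row (rows r0..r0+k-1),
  left to right within each row.\<close>
definition fm_init ::
  "nat \<Rightarrow> nat \<Rightarrow> (int \<Rightarrow> int) \<Rightarrow> (int \<Rightarrow> int) \<Rightarrow> (int \<times> int \<Rightarrow> 'a) \<Rightarrow> (int \<times> int) set
     \<Rightarrow> (int \<Rightarrow> int) \<Rightarrow> int \<Rightarrow> 'a fm_state" where
  "fm_init n k lam mu T S nu r0 =
     \<lparr>outer = lam, inner = nu, ent = T,
      pend = concat (map (\<lambda>h. map (\<lambda>y. (h, y)) (filter (\<lambda>y. (h, y) \<in> S) [mu h + 1 .. nu h]))
                         [r0 .. r0 + int k - 1]),
      queue = [], nqueue = [], removed = []\<rparr>"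

end

theory Submission
  imports Defs
begin

definition per :: "nat \<Rightarrow> nat \<Rightarrow> (int \<Rightarrow> int) \<Rightarrow> bool" where
  "per n k f \<longleftrightarrow> (\<forall>x. f x = f (x + int k) + (int n - int k))"

lemma per_shift:
  assumes "per n k f"
  shows "f (x - t * int k) = f x + t * (int n - int k)"
proof (induction t rule: int_induct[where k=0])
  case base then show ?case by simp
next
  case (step1 i)
  have "f (x - (i+1) * int k) = f (x - (i+1) * int k + int k) + (int n - int k)"
    using assms unfolding per_def by blast
  also have "x - (i+1) * int k + int k = x - i * int k" by (simp add: algebra_simps)
  finally show ?case using step1 by (simp add: algebra_simps)
next
  case (step2 i)
  have "f (x - i * int k) = f (x - i * int k + int k) + (int n - int k)"
    using assms unfolding per_def by blast
  also have "x - i * int k + int k = x - (i - 1) * int k" by (simp add: algebra_simps)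
  finally show ?case using step2 by (simp add: algebra_simps)
qed

lemma per_set_row:
  assumes "per n k f" "0 < k"
  shows "per n k (set_row n k f h v)"
  unfolding per_def
proof
  fix x
  have e: "h - (x + int k) = (h - x) - int k" by simp
  have m: "(h - (x + int k)) mod int k = (h - x) mod int k" unfolding e by (rule minus_mod_self2)
  have "((h - x - int k) + int k) div int k = (h - x - int k) div int k + 1"
    using assms(2) by (intro div_add_self2) simp
  then have dv: "(h - (x + int k)) div int k = (h - x) div int k - 1" unfolding e by simp
  show "set_row n k f h v x = set_row n k f h v (x + int k) + (int n - int k)"
  proof (cases "(h - x) mod int k = 0")
    case True
    then show ?thesis unfolding set_row_def m dv by (simp add: algebra_simps)
  next
    case False
    have "f x = f (x + int k) + (int n - int k)" using assms(1) unfolding per_def by blast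
    then show ?thesis using False unfolding set_row_def m by simp
  qed
qed


definition LLc :: "nat \<Rightarrow> 'a fm_state \<Rightarrow> int \<Rightarrow> 'a list" where
  "LLc k st c = map snd (filter (\<lambda>e. fst e mod int k = c mod int k) (removed st))"

definition Pc :: "nat \<Rightarrow> 'a fm_state \<Rightarrow> int \<Rightarrow> 'a list" where
  "Pc k st c = map fst (filter (\<lambda>e. snd e mod int k = c mod int k) (queue st @ nqueue st))"

definition act :: "'a fm_state \<Rightarrow> int \<Rightarrow> int \<Rightarrow> bool" where
  "act st s y \<longleftrightarrow> inner st s < y \<and> y \<le> outer st s"

definition ent_per :: "nat \<Rightarrow> nat \<Rightarrow> 'a fm_state \<Rightarrow> bool" where
  "ent_per n k st \<longleftrightarrow> (\<forall>x y t. act st x y \<longrightarrow>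
      ent st (x - t * int k, y + t * (int n - int k)) = ent st (x, y))"

definition row3 :: "nat \<Rightarrow> 'a::linorder fm_state \<Rightarrow> int \<Rightarrow> bool" where
  "row3 k st c \<longleftrightarrow> (\<forall>pre. LLc k st (c - 1) = pre @ Pc k st c \<longrightarrow>
     (\<forall>y. act st c y \<longrightarrow> (\<exists>v\<in>set pre. ent st (c, y) \<le> v) \<or> (\<forall>w\<in>set (LLc k st c). w \<le> ent st (c, y))))"

definition row4 :: "'a::linorder fm_state \<Rightarrow> int \<Rightarrow> bool" where
  "row4 st c \<longleftrightarrow> (\<forall>y. act st c y \<longrightarrow> act st c (y + 1) \<longrightarrow> ent st (c, y) \<le> ent st (c, y + 1))"

definition pinv :: "nat \<Rightarrow> 'a::linorder fm_state \<Rightarrow> bool" where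
  "pinv k st \<longleftrightarrow> (\<forall>h y. (h, y) \<in> set (pend st) \<longrightarrow> y \<le> inner st h \<and>
     (y \<le> outer st h \<longrightarrow> (\<forall>w\<in>set (LLc k st h). w \<le> ent st (h, y)) \<and>
        (\<forall>y'. y < y' \<and> y' \<le> outer st h \<and> (inner st h < y' \<or> (h, y') \<in> set (pend st))
              \<longrightarrow> ent st (h, y) \<le> ent st (h, y'))))"

definition prel :: "nat \<Rightarrow> int \<times> int \<Rightarrow> int \<times> int \<Rightarrow> bool" where
  "prel k p q \<longleftrightarrow> (fst p mod int k = fst q mod int k \<longrightarrow> fst p = fst q \<and> snd p < snd q)"

definition Inv :: "nat \<Rightarrow> nat \<Rightarrow> 'a::linorder fm_state \<Rightarrow> bool" where
  "Inv n k st \<longleftrightarrow> per n k (outer st) \<and> per n k (inner st) \<and> ent_per n k st \<and>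
     (\<forall>c. sorted (LLc k st c)) \<and> (\<forall>c. \<exists>pre. LLc k st (c - 1) = pre @ Pc k st c) \<and>
     (\<forall>c. row3 k st c) \<and> (\<forall>c. row4 st c) \<and>
     (pend st \<noteq> [] \<longrightarrow> nqueue st = [] \<and> (\<forall>c. LLc k st (c - 1) = Pc k st c)) \<and>
     pinv k st \<and> sorted_wrt (prel k) (pend st)"

lemma chain_mono:
  fixes g :: "int \<Rightarrow> 'a::order" and a b :: int
  assumes "\<And>z. a \<le> z \<Longrightarrow> z < b \<Longrightarrow> g z \<le> g (z + 1)" "a \<le> b"
  shows "g a \<le> (g b :: 'a::order)"
proof -
  have "\<forall>c. c = a + int m \<longrightarrow> c \<le> b \<longrightarrow> g a \<le> g c" for m
  proof (induction m)
    case 0 then show ?case by simp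
  next
    case (Suc m)
    show ?case
    proof (intro allI impI)
      fix c assume c: "c = a + int (Suc m)" "c \<le> b"
      have "g a \<le> g (a + int m)" using Suc c by simp
      also have "g (a + int m) \<le> g (a + int m + 1)" using assms(1)[of "a + int m"] c by simp
      finally show "g a \<le> g c" using c by (simp add: algebra_simps)
    qed
  qed
  moreover have "b = a + int (nat (b - a))" using assms(2) by simp
  ultimately show ?thesis by blast
qed

lemma modK: "(c - t * int k) mod int k = c mod int k"
proof -
  have "c - t * int k = c + (- t) * int k" by simp
  then show ?thesis by (metis mod_mult_self1)
qed

lemma modK1: "(c - t * int k - 1) mod int k = (c - 1) mod int k"
  using modK[of "c - 1" t k] by (simp add: algebra_simps)

lemma same_class:
  assumes "c mod int k = s mod int k"
  shows "c = s - ((s - c) div int k) * int k"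
proof -
  have "int k dvd s - c" using assms[symmetric] by (simp add: mod_eq_dvd_iff)
  then have "(s - c) div int k * int k = s - c" by (rule dvd_div_mult_self)
  then show ?thesis by simp
qed

lemma act_shift:
  assumes "per n k (outer st)" "per n k (inner st)"
  shows "act st (c - t * int k) y \<longleftrightarrow> act st c (y - t * (int n - int k))"
  using per_shift[OF assms(1), of c t] per_shift[OF assms(2), of c t]
  unfolding act_def by auto

lemma ent_shift:
  assumes "ent_per n k st" "act st c (y - t * (int n - int k))"
  shows "ent st (c - t * int k, y) = ent st (c, y - t * (int n - int k))"
  using assms unfolding ent_per_def by (metis diff_add_cancel)

lemma row3_shift:
  assumes "per n k (outer st)" "per n k (inner st)" "ent_per n k st" "row3 k st c"
  shows "row3 k st (c - t * int k)"
proof -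
  have L: "LLc k st (c - t * int k) = LLc k st c" "LLc k st (c - t * int k - 1) = LLc k st (c - 1)"
    unfolding LLc_def using modK modK1 by metis+
  have P: "Pc k st (c - t * int k) = Pc k st c" unfolding Pc_def using modK by metis
  show ?thesis unfolding row3_def L P
  proof (intro allI impI)
    fix pre y assume pre: "LLc k st (c - 1) = pre @ Pc k st c" and a: "act st (c - t * int k) y"
    have a': "act st c (y - t * (int n - int k))" using a act_shift[OF assms(1,2)] by blast
    show "(\<exists>v\<in>set pre. ent st (c - t * int k, y) \<le> v) \<or> (\<forall>w\<in>set (LLc k st c). w \<le> ent st (c - t * int k, y))"
      unfolding ent_shift[OF assms(3) a'] using assms(4) pre a' unfolding row3_def by blast
  qed
qed

lemma row4_shift:
  assumes "per n k (outer st)" "per n k (inner st)" "ent_per n k st" "row4 st c"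
  shows "row4 st (c - t * int k)"
  unfolding row4_def
proof (intro allI impI)
  fix y assume a: "act st (c - t * int k) y" "act st (c - t * int k) (y + 1)"
  let ?d = "t * (int n - int k)"
  have a': "act st c (y - ?d)" "act st c (y - ?d + 1)"
    using a act_shift[OF assms(1,2)] by (auto simp: algebra_simps)
  have "ent st (c, y - ?d) \<le> ent st (c, y - ?d + 1)" using assms(4) a' unfolding row4_def by blast
  moreover have "ent st (c - t * int k, y + 1) = ent st (c, y - ?d + 1)"
    using ent_shift[OF assms(3), of c "y+1" t] a'(2) by (simp add: algebra_simps)
  ultimately show "ent st (c - t * int k, y) \<le> ent st (c - t * int k, y + 1)"
    using ent_shift[OF assms(3) a'(1)] by simp
qed

lemma row_class:
  assumes "per n k (outer st)" "per n k (inner st)" "ent_per n k st"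
    "row3 k st s" "row4 st s" "c mod int k = s mod int k"
  shows "row3 k st c" "row4 st c"
  using row3_shift[OF assms(1-4)] row4_shift[OF assms(1-3,5)] same_class[OF assms(6)] by metis+


lemma step_a:
  "pend st = (h, y) # rest \<Longrightarrow> y \<le> outer st h \<Longrightarrow> fm_step n k st =
    st\<lparr>pend := rest, queue := queue st @ [(ent st (h, y), h + 1)],
       removed := removed st @ [(h, ent st (h, y))]\<rparr>"
  by (simp add: fm_step_def)

lemma step_b:
  "pend st = (h, y) # rest \<Longrightarrow> \<not> y \<le> outer st h \<Longrightarrow> fm_step n k st =
    st\<lparr>pend := rest, outer := set_row n k (outer st) h (max (outer st h) y)\<rparr>"
  by (simp add: fm_step_def)

lemma step_c:
  "pend st = [] \<Longrightarrow> queue st = (x, s) # rest \<Longrightarrow> (\<forall>y. act st s y \<longrightarrow> ent st (s, y) \<le> x) \<Longrightarrow>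
   fm_step n k st = st\<lparr>queue := rest, outer := set_row n k (outer st) s (outer st s + 1),
                  ent := set_ent n k (ent st) (s, outer st s + 1) x\<rparr>"
  by (simp add: fm_step_def act_def)

lemma step_d:
  "pend st = [] \<Longrightarrow> queue st = (x, s) # rest \<Longrightarrow> \<not> (\<forall>y. act st s y \<longrightarrow> ent st (s, y) \<le> x) \<Longrightarrow>
   y0 = (LEAST y. act st s y \<and> x < ent st (s, y)) \<Longrightarrow>
   fm_step n k st = st\<lparr>queue := rest, ent := set_ent n k (ent st) (s, y0) x,
                   nqueue := nqueue st @ [(ent st (s, y0), s + 1)],
                   removed := removed st @ [(s, ent st (s, y0))]\<rparr>"
  by (auto simp add: fm_step_def act_def Let_def)

lemma step_e:
  "pend st = [] \<Longrightarrow> queue st = [] \<Longrightarrow>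
   fm_step n k st = (if nqueue st = [] then st else st\<lparr>queue := nqueue st, nqueue := []\<rparr>)"
  by (simp add: fm_step_def)

lemma LLc_cong: "c mod int k = c' mod int k \<Longrightarrow> LLc k st c = LLc k st c'"
  unfolding LLc_def by simp

lemma Pc_cong: "c mod int k = c' mod int k \<Longrightarrow> Pc k st c = Pc k st c'"
  unfolding Pc_def by simp

lemma modshift: "(c - 1) mod int k = h mod int k \<longleftrightarrow> c mod int k = (h + 1) mod int k"
  by (simp add: mod_eq_dvd_iff algebra_simps)

lemma inv_e:
  assumes "Inv n k st" "pend st = []" "queue st = []"
  shows "Inv n k (fm_step n k st)"
proof (cases "nqueue st = []")
  case True then show ?thesis using assms by (simp add: step_e)
next
  case False
  let ?st = "st\<lparr>queue := nqueue st, nqueue := []\<rparr>"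
  have "LLc k ?st = LLc k st" "Pc k ?st = Pc k st" "act ?st = act st"
    using assms(3) by (auto simp: LLc_def Pc_def act_def fun_eq_iff)
  moreover have "ent_per n k ?st = ent_per n k st" unfolding ent_per_def act_def by simp
  moreover have "pinv k ?st = pinv k st" unfolding pinv_def LLc_def by simp
  moreover have "row3 k ?st = row3 k st" unfolding row3_def fun_eq_iff
    using calculation by simp
  moreover have "row4 ?st = row4 st" unfolding row4_def fun_eq_iff using calculation by simp
  ultimately have "Inv n k ?st" using assms unfolding Inv_def by auto
  then show ?thesis using assms False by (simp add: step_e)
qed


lemma inv_a:
  assumes I: "Inv n k st" and k: "0 < k" and p: "pend st = (h, y) # rest" and yo: "y \<le> outer st h"
  shows "Inv n k (fm_step n k st)"
proof -
  define e where "e = ent st (h, y)"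
  define st' where "st' = st\<lparr>pend := rest, queue := queue st @ [(e, h + 1)], removed := removed st @ [(h, e)]\<rparr>"
  have step: "fm_step n k st = st'" unfolding st'_def e_def using step_a[OF p yo] .
  have nq: "nqueue st = []" and eqLP: "\<And>c. LLc k st (c - 1) = Pc k st c" using I p unfolding Inv_def by auto
  have pi: "pinv k st" and sw: "sorted_wrt (prel k) (pend st)" using I unfolding Inv_def by auto
  have hp: "(h, y) \<in> set (pend st)" using p by simp
  have yi: "y \<le> inner st h" and A1: "\<forall>w\<in>set (LLc k st h). w \<le> e"
    and A2: "\<And>y'. y < y' \<Longrightarrow> y' \<le> outer st h \<Longrightarrow> inner st h < y' \<or> (h, y') \<in> set (pend st) \<Longrightarrow> e \<le> ent st (h, y')"
    using pi hp yo unfolding pinv_def e_def by blast+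
  have LL': "\<And>c. LLc k st' c = LLc k st c @ (if c mod int k = h mod int k then [e] else [])"
    unfolding st'_def LLc_def by simp
  have P': "\<And>c. Pc k st' c = Pc k st c @ (if c mod int k = (h + 1) mod int k then [e] else [])"
    unfolding st'_def Pc_def using nq by simp
  have eq': "\<And>c. LLc k st' (c - 1) = Pc k st' c" unfolding LL' P' eqLP modshift by simp
  have actE: "act st' = act st" unfolding st'_def act_def by (simp add: fun_eq_iff)
  have entE: "ent st' = ent st" "outer st' = outer st" "inner st' = inner st" "pend st' = rest"
    unfolding st'_def by simp_all
  have per1: "per n k (outer st')" "per n k (inner st')" using I entE unfolding Inv_def by auto
  have ep: "ent_per n k st'" using I unfolding Inv_def ent_per_def actE entE by simp
  have r4: "\<And>c. row4 st' c" using I unfolding Inv_def row4_def actE entE by simp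
  have sorted': "\<And>c. sorted (LLc k st' c)"
  proof -
    fix c
    show "sorted (LLc k st' c)"
    proof (cases "c mod int k = h mod int k")
      case True
      then have "LLc k st c = LLc k st h" by (rule LLc_cong)
      then show ?thesis using I A1 True unfolding LL' Inv_def by (auto simp: sorted_append)
    next
      case False then show ?thesis using I unfolding LL' Inv_def by simp
    qed
  qed
  have r3h: "row3 k st' h"
    unfolding row3_def
  proof (intro allI impI)
    fix pre y' assume pre: "LLc k st' (h - 1) = pre @ Pc k st' h" and a: "act st' h y'"
    have a0: "act st h y'" using a actE by simp
    have "row3 k st h" using I unfolding Inv_def by blast
    then have old: "\<forall>w\<in>set (LLc k st h). w \<le> ent st (h, y')"
      using a0 eqLP[of h] unfolding row3_def by fastforce
    have "e \<le> ent st (h, y')" using A2[of y'] a0 yi unfolding act_def by auto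
    then show "(\<exists>v\<in>set pre. ent st' (h, y') \<le> v) \<or> (\<forall>w\<in>set (LLc k st' h). w \<le> ent st' (h, y'))"
      using old unfolding LL' entE by auto
  qed
  have r3: "\<And>c. row3 k st' c"
  proof -
    fix c
    show "row3 k st' c"
    proof (cases "c mod int k = h mod int k")
      case True
      show ?thesis using row_class(1)[OF per1 ep r3h r4 True] by blast
    next
      case False
      have "row3 k st c" using I unfolding Inv_def by blast
      then show ?thesis using False eq' eqLP unfolding row3_def LL' actE entE by fastforce
    qed
  qed
  have pinv': "pinv k st'"
    unfolding pinv_def entE
  proof (intro allI impI)
    fix h2 y2 assume m: "(h2, y2) \<in> set rest"
    have m0: "(h2, y2) \<in> set (pend st)" using m p by simp
    have rel: "prel k (h, y) (h2, y2)" using sw p m by simp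
    have old: "y2 \<le> inner st h2 \<and> (y2 \<le> outer st h2 \<longrightarrow> (\<forall>w\<in>set (LLc k st h2). w \<le> ent st (h2, y2)) \<and>
        (\<forall>y'. y2 < y' \<and> y' \<le> outer st h2 \<and> (inner st h2 < y' \<or> (h2, y') \<in> set (pend st))
              \<longrightarrow> ent st (h2, y2) \<le> ent st (h2, y')))" using pi m0 unfolding pinv_def by blast
    have new1: "y2 \<le> outer st h2 \<Longrightarrow> \<forall>w\<in>set (LLc k st' h2). w \<le> ent st (h2, y2)"
    proof -
      assume y2o: "y2 \<le> outer st h2"
      show "\<forall>w\<in>set (LLc k st' h2). w \<le> ent st (h2, y2)"
      proof (cases "h2 mod int k = h mod int k")
        case True
        then have "h2 = h" "y < y2" using rel unfolding prel_def by auto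
        then have "e \<le> ent st (h2, y2)" using A2[of y2] y2o m0 by simp
        then show ?thesis using old y2o unfolding LL' by auto
      next
        case False then show ?thesis using old y2o unfolding LL' by auto
      qed
    qed
    show "y2 \<le> inner st h2 \<and> (y2 \<le> outer st h2 \<longrightarrow> (\<forall>w\<in>set (LLc k st' h2). w \<le> ent st (h2, y2)) \<and>
        (\<forall>y'. y2 < y' \<and> y' \<le> outer st h2 \<and> (inner st h2 < y' \<or> (h2, y') \<in> set rest)
              \<longrightarrow> ent st (h2, y2) \<le> ent st (h2, y')))"
      using old new1 entE p by auto
  qed
  have "Inv n k st'" unfolding Inv_def
    using per1 ep sorted' eq' r3 r4 pinv' sw p entE nq unfolding st'_def by auto
  then show ?thesis using step by simp
qed


lemma modzero: "(h - c) mod int k = 0 \<longleftrightarrow> c mod int k = h mod int k"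
  by (metis dvd_eq_mod_eq_0 dvd_diff_commute mod_eq_dvd_iff)

lemma set_row_other: "c mod int k \<noteq> h mod int k \<Longrightarrow> set_row n k f h v c = f c"
  unfolding set_row_def using modzero by simp

lemma set_row_same: "c mod int k = h mod int k \<Longrightarrow> set_row n k f h v c = v + ((h - c) div int k) * (int n - int k)"
  unfolding set_row_def using modzero by simp

lemma inv_b:
  assumes I: "Inv n k st" and k: "0 < k" and p: "pend st = (h, y) # rest" and yo: "\<not> y \<le> outer st h"
  shows "Inv n k (fm_step n k st)"
proof -
  define st' where "st' = st\<lparr>pend := rest, outer := set_row n k (outer st) h (max (outer st h) y)\<rparr>"
  have step: "fm_step n k st = st'" unfolding st'_def using step_b[OF p yo] .
  have mx: "max (outer st h) y = y" using yo by simp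
  have pi: "pinv k st" and sw: "sorted_wrt (prel k) (pend st)" using I unfolding Inv_def by auto
  have hp: "(h, y) \<in> set (pend st)" using p by simp
  have yi: "y \<le> inner st h" using pi hp unfolding pinv_def by blast
  have peri: "per n k (inner st)" and pero: "per n k (outer st)" using I unfolding Inv_def by auto
  have entE: "ent st' = ent st" "inner st' = inner st" "pend st' = rest" "removed st' = removed st"
    "queue st' = queue st" "nqueue st' = nqueue st" "outer st' = set_row n k (outer st) h y"
    unfolding st'_def mx by simp_all
  have LLE: "LLc k st' = LLc k st" "Pc k st' = Pc k st" unfolding LLc_def Pc_def fun_eq_iff entE by simp_all
  have actE: "act st' c z \<longleftrightarrow> c mod int k \<noteq> h mod int k \<and> act st c z" for c z
  proof (cases "c mod int k = h mod int k")
    case True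
    have c: "c = h - ((h - c) div int k) * int k" using same_class[OF True] .
    have "inner st c = inner st h + ((h - c) div int k) * (int n - int k)"
      using per_shift[OF peri, of h "(h - c) div int k"] c by simp
    then show ?thesis unfolding act_def entE set_row_same[OF True] using True yi by auto
  next
    case False then show ?thesis unfolding act_def entE set_row_other[OF False] by simp
  qed
  have per1: "per n k (outer st')" "per n k (inner st')" using per_set_row[OF pero k] peri entE by auto
  have ep: "ent_per n k st'" using I unfolding Inv_def ent_per_def actE entE by simp
  have r4: "\<And>c. row4 st' c" using I unfolding Inv_def row4_def actE entE by simp
  have r3: "\<And>c. row3 k st' c" using I unfolding Inv_def row3_def actE entE LLE by simp
  have pinv': "pinv k st'"
    unfolding pinv_def entE LLE
  proof (intro allI impI)
    fix h2 y2 assume m: "(h2, y2) \<in> set rest"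
    have m0: "(h2, y2) \<in> set (pend st)" using m p by simp
    have rel: "prel k (h, y) (h2, y2)" using sw p m by simp
    have old: "y2 \<le> inner st h2 \<and> (y2 \<le> outer st h2 \<longrightarrow> (\<forall>w\<in>set (LLc k st h2). w \<le> ent st (h2, y2)) \<and>
        (\<forall>y'. y2 < y' \<and> y' \<le> outer st h2 \<and> (inner st h2 < y' \<or> (h2, y') \<in> set (pend st))
              \<longrightarrow> ent st (h2, y2) \<le> ent st (h2, y')))" using pi m0 unfolding pinv_def by blast
    show "y2 \<le> inner st h2 \<and> (y2 \<le> set_row n k (outer st) h y h2 \<longrightarrow> (\<forall>w\<in>set (LLc k st h2). w \<le> ent st (h2, y2)) \<and>
        (\<forall>y'. y2 < y' \<and> y' \<le> set_row n k (outer st) h y h2 \<and> (inner st h2 < y' \<or> (h2, y') \<in> set rest)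
              \<longrightarrow> ent st (h2, y2) \<le> ent st (h2, y')))"
    proof (cases "h2 mod int k = h mod int k")
      case True
      then have "h2 = h" "y < y2" using rel unfolding prel_def by auto
      then show ?thesis using old set_row_same[OF True, of n "outer st" y] by auto
    next
      case False
      then show ?thesis using old set_row_other[OF False] p by auto
    qed
  qed
  have "Inv n k st'" unfolding Inv_def
    using per1 ep r3 r4 pinv' sw p entE I LLE unfolding Inv_def by auto
  then show ?thesis using step by simp
qed


lemma sb_shift: "same_box n k p (a - t * int k, b + t * (int n - int k)) \<longleftrightarrow> same_box n k p (a, b)"
proof
  assume "same_box n k p (a - t * int k, b + t * (int n - int k))"
  then obtain u where u: "(a - t * int k, b + t * (int n - int k)) = (fst p - u * int k, snd p + u * (int n - int k))"
    unfolding same_box_def by blast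
  then have "(a, b) = (fst p - (u - t) * int k, snd p + (u - t) * (int n - int k))"
    by (auto simp: algebra_simps)
  then show "same_box n k p (a, b)" unfolding same_box_def by blast
next
  assume "same_box n k p (a, b)"
  then obtain u where u: "(a, b) = (fst p - u * int k, snd p + u * (int n - int k))"
    unfolding same_box_def by blast
  then have "(a - t * int k, b + t * (int n - int k)) = (fst p - (u + t) * int k, snd p + (u + t) * (int n - int k))"
    by (auto simp: algebra_simps)
  then show "same_box n k p (a - t * int k, b + t * (int n - int k))" unfolding same_box_def by blast
qed

lemma sb_class: "same_box n k (s, y0) (c, z) \<Longrightarrow> c mod int k = s mod int k"
  unfolding same_box_def using modK by auto

lemma sb_row: "0 < k \<Longrightarrow> same_box n k (s, y0) (s, z) \<longleftrightarrow> z = y0"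
  unfolding same_box_def by auto

lemma sb_new:
  assumes "per n k (outer st)"
  shows "same_box n k (s, outer st s + 1) (c, z) \<longleftrightarrow> c mod int k = s mod int k \<and> z = outer st c + 1"
proof
  assume a: "same_box n k (s, outer st s + 1) (c, z)"
  then obtain u where u: "c = s - u * int k" "z = outer st s + 1 + u * (int n - int k)"
    unfolding same_box_def by auto
  then show "c mod int k = s mod int k \<and> z = outer st c + 1"
    using per_shift[OF assms, of s u] modK by auto
next
  assume a: "c mod int k = s mod int k \<and> z = outer st c + 1"
  define t where "t = (s - c) div int k"
  have c: "c = s - t * int k" unfolding t_def using same_class a by blast
  have "z = outer st s + 1 + t * (int n - int k)" using a per_shift[OF assms, of s t] c by simp
  then show "same_box n k (s, outer st s + 1) (c, z)" unfolding same_box_def using c by auto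
qed

lemma set_ent_app: "set_ent n k T p v (c, z) = (if same_box n k p (c, z) then v else T (c, z))"
  unfolding set_ent_def by simp

lemma inv_c:
  assumes I: "Inv n k st" and k: "0 < k" and p: "pend st = []" and q: "queue st = (x, s) # rest"
    and all: "\<forall>y. act st s y \<longrightarrow> ent st (s, y) \<le> x"
  shows "Inv n k (fm_step n k st)"
proof -
  define o' where "o' = outer st s"
  define st' where "st' = st\<lparr>queue := rest, outer := set_row n k (outer st) s (o' + 1),
                  ent := set_ent n k (ent st) (s, o' + 1) x\<rparr>"
  have step: "fm_step n k st = st'" unfolding st'_def o'_def using step_c[OF p q all] .
  have peri: "per n k (inner st)" and pero: "per n k (outer st)" and ep0: "ent_per n k st"
    using I unfolding Inv_def by auto
  have E: "inner st' = inner st" "pend st' = []" "removed st' = removed st"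
    "queue st' = rest" "nqueue st' = nqueue st" "outer st' = set_row n k (outer st) s (o' + 1)"
    "ent st' = set_ent n k (ent st) (s, o' + 1) x"
    unfolding st'_def using p by simp_all
  have LLE: "LLc k st' = LLc k st" unfolding LLc_def fun_eq_iff E by simp
  have PE: "Pc k st c = (if c mod int k = s mod int k then [x] else []) @ Pc k st' c" for c
    unfolding Pc_def E q by simp
  have outE: "outer st' c = (if c mod int k = s mod int k then outer st c + 1 else outer st c)" for c
  proof (cases "c mod int k = s mod int k")
    case True
    have c: "c = s - ((s - c) div int k) * int k" using same_class[OF True] .
    have "outer st c = o' + ((s - c) div int k) * (int n - int k)"
      unfolding o'_def using per_shift[OF pero, of s "(s - c) div int k"] c by simp
    then show ?thesis unfolding E set_row_same[OF True] using True by simp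
  next
    case False then show ?thesis unfolding E set_row_other[OF False] by simp
  qed
  have actE: "act st' c z \<longleftrightarrow> act st c z \<or> (c mod int k = s mod int k \<and> z = outer st c + 1 \<and> inner st c < z)" for c z
    by (auto simp add: act_def outE E(1))
  have newpos: "same_box n k (s, o' + 1) (c, z) \<longleftrightarrow> c mod int k = s mod int k \<and> z = outer st c + 1" for c z
    unfolding o'_def by (rule sb_new[OF pero])
  have entO: "act st c z \<Longrightarrow> ent st' (c, z) = ent st (c, z)" for c z
    unfolding E set_ent_app newpos act_def by auto
  have entN: "c mod int k = s mod int k \<Longrightarrow> ent st' (c, outer st c + 1) = x" for c
    unfolding E set_ent_app newpos by simp
  have per1: "per n k (outer st')" "per n k (inner st')" using per_set_row[OF pero k] peri E by auto
  have ep: "ent_per n k st'"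
    unfolding ent_per_def
  proof (intro allI impI)
    fix a b t assume a: "act st' a b"
    show "ent st' (a - t * int k, b + t * (int n - int k)) = ent st' (a, b)"
    proof (cases "act st a b")
      case True
      have "act st (a - t * int k) (b + t * (int n - int k))" using act_shift[OF pero peri] True by simp
      then show ?thesis using entO True ep0 unfolding ent_per_def by metis
    next
      case False
      then have "same_box n k (s, o' + 1) (a, b)" using a actE newpos by blast
      then have "same_box n k (s, o' + 1) (a - t * int k, b + t * (int n - int k))" using sb_shift by blast
      then show ?thesis unfolding E set_ent_app using \<open>same_box n k (s, o' + 1) (a, b)\<close> by simp
    qed
  qed
  obtain pre0 where pre0: "LLc k st (s - 1) = pre0 @ Pc k st s" using I unfolding Inv_def by blast
  have r3s: "row3 k st' s"
    unfolding row3_def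
  proof (intro allI impI)
    fix pre z assume pre: "LLc k st' (s - 1) = pre @ Pc k st' s" and a: "act st' s z"
    have "pre = pre0 @ [x]" using pre pre0 PE[of s] LLE by simp
    show "(\<exists>v\<in>set pre. ent st' (s, z) \<le> v) \<or> (\<forall>w\<in>set (LLc k st' s). w \<le> ent st' (s, z))"
    proof (cases "act st s z")
      case True
      have "row3 k st s" using I unfolding Inv_def by blast
      then have "(\<exists>v\<in>set pre0. ent st (s, z) \<le> v) \<or> (\<forall>w\<in>set (LLc k st s). w \<le> ent st (s, z))"
        using pre0 True unfolding row3_def by blast
      then show ?thesis using entO[OF True] \<open>pre = pre0 @ [x]\<close> LLE by auto
    next
      case False
      then have "z = outer st s + 1" using a actE by blast
      then show ?thesis using entN[of s] \<open>pre = pre0 @ [x]\<close> by auto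
    qed
  qed
  have r4s: "row4 st' s"
    unfolding row4_def
  proof (intro allI impI)
    fix z assume a: "act st' s z" "act st' s (z + 1)"
    show "ent st' (s, z) \<le> ent st' (s, z + 1)"
    proof (cases "act st s (z + 1)")
      case True
      then have "act st s z" using a(1) actE[of s z] unfolding act_def by auto
      then show ?thesis using I True entO unfolding Inv_def row4_def by metis
    next
      case False
      then have z1: "z + 1 = outer st s + 1" using a actE by blast
      then have "act st s z" using a actE by auto
      then show ?thesis using entO all entN[of s] z1 by auto
    qed
  qed
  have r3: "row3 k st' c" and r4: "row4 st' c" for c
  proof -
    have "row3 k st' c \<and> row4 st' c"
    proof (cases "c mod int k = s mod int k")
      case True
      then show ?thesis using row_class[OF per1 ep r3s r4s True] by blast
    next
      case False
      have aE: "act st' c = act st c" using actE False by (auto simp: fun_eq_iff)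
      have eE: "act st c z \<Longrightarrow> ent st' (c, z) = ent st (c, z)" for z using entO by blast
      have PE': "Pc k st' c = Pc k st c" using PE[of c] False by simp
      have "row3 k st c" "row4 st c" using I unfolding Inv_def by blast+
      then show ?thesis unfolding row3_def row4_def aE LLE PE' using eE
        by (metis act_def)
    qed
    then show "row3 k st' c" "row4 st' c" by auto
  qed
  have suf: "\<exists>pre. LLc k st' (c - 1) = pre @ Pc k st' c" for c
  proof -
    obtain pre where "LLc k st (c - 1) = pre @ Pc k st c" using I unfolding Inv_def by blast
    then show ?thesis using PE[of c] LLE by (metis append.assoc)
  qed
  have "Inv n k st'" unfolding Inv_def pinv_def
    using per1 ep r3 r4 suf E I LLE unfolding Inv_def by auto
  then show ?thesis using step by simp
qed


lemma inv_d:
  assumes I: "Inv n k st" and k: "0 < k" and p: "pend st = []" and q: "queue st = (x, s) # rest"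
    and nall: "\<not> (\<forall>y. act st s y \<longrightarrow> ent st (s, y) \<le> x)"
  shows "Inv n k (fm_step n k st)"
proof -
  define A where "A = {y. act st s y \<and> x < ent st (s, y)}"
  have Afin: "finite A" unfolding A_def act_def
    by (rule finite_subset[of _ "{inner st s <.. outer st s}"]) auto
  have Ane: "A \<noteq> {}" using nall unfolding A_def by auto
  define y0 where "y0 = (LEAST y. act st s y \<and> x < ent st (s, y))"
  have mA: "Min A \<in> A" using Min_in[OF Afin Ane] .
  have mle: "\<And>y. y \<in> A \<Longrightarrow> Min A \<le> y" using Min_le[OF Afin] by blast
  have y0m: "y0 = Min A" unfolding y0_def
    by (rule Least_equality) (use mA mle in \<open>auto simp: A_def\<close>)
  have y0A: "act st s y0" "x < ent st (s, y0)" using Min_in[OF Afin Ane] y0m unfolding A_def by auto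
  have y0le: "\<And>z. act st s z \<Longrightarrow> x < ent st (s, z) \<Longrightarrow> y0 \<le> z" using Afin y0m unfolding A_def by auto
  define x' where "x' = ent st (s, y0)"
  define st' where "st' = st\<lparr>queue := rest, ent := set_ent n k (ent st) (s, y0) x,
                   nqueue := nqueue st @ [(x', s + 1)], removed := removed st @ [(s, x')]\<rparr>"
  have step: "fm_step n k st = st'" unfolding st'_def x'_def using step_d[OF p q nall y0_def] .
  have peri: "per n k (inner st)" and pero: "per n k (outer st)" and ep0: "ent_per n k st"
    and r3o: "\<And>c. row3 k st c" and r4o: "\<And>c. row4 st c" and so: "\<And>c. sorted (LLc k st c)"
    using I unfolding Inv_def by auto
  have E: "inner st' = inner st" "pend st' = []" "outer st' = outer st"
    "ent st' = set_ent n k (ent st) (s, y0) x"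
    unfolding st'_def using p by simp_all
  have actE: "act st' = act st" unfolding act_def fun_eq_iff E by simp
  have entO: "c mod int k \<noteq> s mod int k \<Longrightarrow> ent st' (c, z) = ent st (c, z)" for c z
    unfolding E set_ent_app using sb_class[of n k s y0 c z] by auto
  have entS: "ent st' (s, z) = (if z = y0 then x else ent st (s, z))" for z
    unfolding E set_ent_app using sb_row[OF k] by simp
  have LL': "LLc k st' c = LLc k st c @ (if c mod int k = s mod int k then [x'] else [])" for c
    unfolding st'_def LLc_def by simp
  define R where "R c = map fst (filter (\<lambda>e. snd e mod int k = c mod int k) (rest @ nqueue st))" for c
  have PE: "Pc k st c = (if c mod int k = s mod int k then [x] else []) @ R c" for c
    unfolding Pc_def R_def q by simp
  have PE': "Pc k st' c = R c @ (if c mod int k = (s + 1) mod int k then [x'] else [])" for c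
    unfolding Pc_def R_def st'_def by simp
  have xx': "x < x'" using y0A unfolding x'_def by simp
  obtain pre0 where pre0: "LLc k st (s - 1) = pre0 @ Pc k st s" using I unfolding Inv_def by blast
  have pre0x: "\<forall>v\<in>set pre0. v \<le> x" using so[of "s - 1"] pre0 PE[of s] by (simp add: sorted_append)
  have LLx': "\<forall>w\<in>set (LLc k st s). w \<le> x'"
  proof -
    have "(\<exists>v\<in>set pre0. ent st (s, y0) \<le> v) \<or> (\<forall>w\<in>set (LLc k st s). w \<le> ent st (s, y0))"
      using r3o[of s] pre0 y0A(1) unfolding row3_def by blast
    then show ?thesis using pre0x xx' unfolding x'_def by force
  qed
  have ep: "ent_per n k st'"
    unfolding ent_per_def actE
  proof (intro allI impI)
    fix a b t assume a: "act st a b"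
    show "ent st' (a - t * int k, b + t * (int n - int k)) = ent st' (a, b)"
      unfolding E set_ent_app sb_shift using ep0 a unfolding ent_per_def by simp
  qed
  have per1: "per n k (outer st')" "per n k (inner st')" using pero peri E by auto
  have sorted': "sorted (LLc k st' c)" for c
  proof (cases "c mod int k = s mod int k")
    case True
    then have "LLc k st c = LLc k st s" by (rule LLc_cong)
    then show ?thesis using so[of c] LLx' True unfolding LL' by (auto simp: sorted_append)
  next
    case False then show ?thesis using so[of c] unfolding LL' by simp
  qed
  have LLm: "LLc k st' (c - 1) = LLc k st (c - 1) @ (if c mod int k = (s + 1) mod int k then [x'] else [])" for c
    unfolding LL' modshift by simp
  have suf: "\<exists>pre. LLc k st' (c - 1) = pre @ Pc k st' c" for c
  proof -
    obtain pre where "LLc k st (c - 1) = pre @ Pc k st c" using I unfolding Inv_def by blast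
    then show ?thesis unfolding LLm PE' using PE[of c] by (metis append.assoc)
  qed
  have r3s: "row3 k st' s"
    unfolding row3_def
  proof (intro allI impI)
    fix pre z assume pre: "LLc k st' (s - 1) = pre @ Pc k st' s" and a: "act st' s z"
    have preE: "pre = pre0 @ [x]" using pre pre0 PE[of s] unfolding LLm PE' by simp
    have a0: "act st s z" using a actE by simp
    show "(\<exists>v\<in>set pre. ent st' (s, z) \<le> v) \<or> (\<forall>w\<in>set (LLc k st' s). w \<le> ent st' (s, z))"
    proof (cases "z = y0")
      case True then show ?thesis unfolding entS preE by simp
    next
      case False
      have old: "(\<exists>v\<in>set pre0. ent st (s, z) \<le> v) \<or> (\<forall>w\<in>set (LLc k st s). w \<le> ent st (s, z))"
        using r3o[of s] pre0 a0 unfolding row3_def by blast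
      show ?thesis
      proof (cases "ent st (s, z) \<le> x")
        case True then show ?thesis unfolding entS preE using False by simp
      next
        case nle: False
        then have "y0 \<le> z" using y0le a0 by simp
        have "ent st (s, y0) \<le> ent st (s, z)"
        proof (rule chain_mono[where g = "\<lambda>z. ent st (s, z)"])
          fix w assume w: "y0 \<le> w" "w < z"
          have "act st s w" "act st s (w + 1)" using w y0A(1) a0 unfolding act_def by auto
          then show "ent st (s, w) \<le> ent st (s, w + 1)" using r4o[of s] unfolding row4_def by blast
        qed fact
        then show ?thesis using old False unfolding entS preE LL' x'_def by auto
      qed
    qed
  qed
  have r4s: "row4 st' s"
    unfolding row4_def actE
  proof (intro allI impI)
    fix z assume a: "act st s z" "act st s (z + 1)"
    have o: "ent st (s, z) \<le> ent st (s, z + 1)" using r4o[of s] a unfolding row4_def by blast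
    show "ent st' (s, z) \<le> ent st' (s, z + 1)"
    proof (cases "z = y0")
      case True then show ?thesis unfolding entS using o xx' x'_def by simp
    next
      case False
      show ?thesis
      proof (cases "z + 1 = y0")
        case True
        then have "\<not> x < ent st (s, z)" using y0le[of z] a by auto
        then show ?thesis unfolding entS using True False by simp
      next
        case False2: False
        then show ?thesis unfolding entS using False o by simp
      qed
    qed
  qed
  have r3: "row3 k st' c" and r4: "row4 st' c" for c
  proof -
    have "row3 k st' c \<and> row4 st' c"
    proof (cases "c mod int k = s mod int k")
      case True
      then show ?thesis using row_class[OF per1 ep r3s r4s True] by blast
    next
      case False
      have LLE: "LLc k st' c = LLc k st c" unfolding LL' using False by simp
      have pp: "LLc k st' (c - 1) = pre @ Pc k st' c \<longleftrightarrow> LLc k st (c - 1) = pre @ Pc k st c" for pre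
        unfolding LLm PE' PE using False by auto
      show ?thesis using r3o[of c] r4o[of c] entO[OF False] unfolding row3_def row4_def actE LLE pp
        by simp
    qed
    then show "row3 k st' c" "row4 st' c" by auto
  qed
  have "Inv n k st'" unfolding Inv_def pinv_def
    using per1 ep r3 r4 suf E sorted' by auto
  then show ?thesis using step by simp
qed


lemma inv_step:
  assumes "Inv n k st" "0 < k"
  shows "Inv n k (fm_step n k st)"
proof (cases "pend st")
  case (Cons a rest)
  obtain h y where a: "a = (h, y)" by (cases a)
  show ?thesis
  proof (cases "y \<le> outer st h")
    case True then show ?thesis using inv_a[OF assms] Cons a by simp
  next
    case False then show ?thesis using inv_b[OF assms] Cons a by simp
  qed
next
  case Nil
  show ?thesis
  proof (cases "queue st")
    case Nil2: Nil then show ?thesis using inv_e[OF assms(1)] Nil by simp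
  next
    case (Cons b rest)
    obtain x s where b: "b = (x, s)" by (cases b)
    show ?thesis
    proof (cases "\<forall>y. act st s y \<longrightarrow> ent st (s, y) \<le> x")
      case True then show ?thesis using inv_c[OF assms Nil] Cons b by simp
    next
      case False then show ?thesis using inv_d[OF assms Nil] Cons b by simp
    qed
  qed
qed

lemma sw_concat:
  "sorted_wrt (<) hs \<Longrightarrow> sorted_wrt (\<lambda>p q. fst p < fst q \<or> fst p = fst q \<and> snd p < snd q)
     (concat (map (\<lambda>h. map (\<lambda>y. (h, y)) (filter (P h) [(a h :: int) .. b h])) hs))"
proof (induction hs)
  case Nil then show ?case by simp
next
  case (Cons h hs)
  have 1: "sorted_wrt (\<lambda>p q. fst p < fst q \<or> fst p = fst q \<and> snd p < snd q)
      (map (\<lambda>y. (h, y)) (filter (P h) [a h .. b h]))"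
    unfolding sorted_wrt_map by (rule sorted_wrt_filter) (simp add: sorted_wrt_mono_rel[OF _ sorted_wrt_upto])
  show ?case using Cons 1 by (auto simp: sorted_wrt_append)
qed

lemma range_mod:
  assumes "r0 \<le> a" "a < b" "b \<le> r0 + int k - 1"
  shows "a mod int k \<noteq> b mod int k"
proof
  assume "a mod int k = b mod int k"
  then have "int k dvd b - a" by (metis mod_eq_dvd_iff)
  then have "int k \<le> b - a" using assms by (intro zdvd_imp_le) auto
  then show False using assms by simp
qed

lemma inv_init:
  fixes T :: "int \<times> int \<Rightarrow> 'a::linorder"
  assumes k: "0 < k" and tab: "cyl_tableau n k lam mu T" and inp: "fullmulti_input n k mu S nu"
  shows "Inv n k (fm_init n k lam mu T S nu r0)"
proof -
  let ?st = "fm_init n k lam mu T S nu r0"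
  define PL where "PL = concat (map (\<lambda>h. map (\<lambda>y. (h, y)) (filter (\<lambda>y. (h, y) \<in> S) [mu h + 1 .. nu h]))
                         [r0 .. r0 + int k - 1])"
  have E: "outer ?st = lam" "inner ?st = nu" "ent ?st = T" "pend ?st = PL" "queue ?st = []"
    "nqueue ?st = []" "removed ?st = []" unfolding fm_init_def PL_def by simp_all
  have cl: "cylindric n k lam" and cm: "cylindric n k mu" and cn: "cylindric n k nu"
    using tab inp unfolding cyl_tableau_def fullmulti_input_def by auto
  have tper: "\<And>p q. in_skew lam mu p \<Longrightarrow> same_box n k p q \<Longrightarrow> T q = T p"
    and trow: "\<And>x y. in_skew lam mu (x, y) \<Longrightarrow> in_skew lam mu (x, y + 1) \<Longrightarrow> T (x, y) \<le> T (x, y + 1)"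
    using tab unfolding cyl_tableau_def by blast+
  have munu: "mu x \<le> nu x" for x
  proof -
    have "in_shape mu (x, mu x)" by (simp add: in_shape_def)
    then have "in_shape nu (x, mu x)" using inp unfolding fullmulti_input_def by blast
    then show ?thesis by (simp add: in_shape_def)
  qed
  have perl: "per n k lam" and pern: "per n k nu" using cl cn unfolding cylindric_def per_def by blast+
  have actS: "act ?st x y \<Longrightarrow> in_skew lam mu (x, y)" for x y
    unfolding act_def E in_skew_def in_shape_def using munu[of x] by auto
  have LL0: "LLc k ?st c = []" "Pc k ?st c = []" for c unfolding LLc_def Pc_def E by simp_all
  have ep: "ent_per n k ?st" unfolding ent_per_def E
  proof (intro allI impI)
    fix x y t assume a: "act ?st x y"
    have "same_box n k (x, y) (x - t * int k, y + t * (int n - int k))" unfolding same_box_def by auto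
    then show "T (x - t * int k, y + t * (int n - int k)) = T (x, y)" using tper actS[OF a] by blast
  qed
  have r3: "row3 k ?st c" for c unfolding row3_def LL0 by simp
  have r4: "row4 ?st c" for c unfolding row4_def E using actS trow by blast
  have memPL: "(h, y) \<in> set PL \<Longrightarrow> r0 \<le> h \<and> h \<le> r0 + int k - 1 \<and> mu h < y \<and> y \<le> nu h" for h y
    unfolding PL_def by auto
  have pi: "pinv k ?st" unfolding pinv_def E LL0
  proof (intro allI impI)
    fix h y assume m: "(h, y) \<in> set PL"
    have b: "mu h < y" "y \<le> nu h" using memPL[OF m] by auto
    show "y \<le> nu h \<and> (y \<le> lam h \<longrightarrow> (\<forall>w\<in>set []. w \<le> T (h, y)) \<and>
        (\<forall>y'. y < y' \<and> y' \<le> lam h \<and> (nu h < y' \<or> (h, y') \<in> set PL) \<longrightarrow> T (h, y) \<le> T (h, y')))"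
    proof (intro conjI impI allI)
      fix y' assume "y < y' \<and> y' \<le> lam h \<and> (nu h < y' \<or> (h, y') \<in> set PL)"
      then have y': "y < y'" "y' \<le> lam h" by auto
      show "T (h, y) \<le> T (h, y')"
      proof (rule chain_mono[where g = "\<lambda>z. T (h, z)"])
        fix w assume "y \<le> w" "w < y'"
        then show "T (h, w) \<le> T (h, w + 1)" using trow b y' unfolding in_skew_def in_shape_def by auto
      qed (use y' in simp)
    qed (use b in auto)
  qed
  have sw: "sorted_wrt (prel k) PL"
  proof -
  have swl: "sorted_wrt (\<lambda>p q. fst p < fst q \<or> fst p = fst q \<and> snd p < snd q) PL"
    unfolding PL_def by (rule sw_concat[OF sorted_wrt_upto])
  show ?thesis
  proof (rule sorted_wrt_mono_rel[OF _ swl])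
    fix p q assume pq: "p \<in> set PL" "q \<in> set PL"
      and r: "fst p < fst q \<or> fst p = fst q \<and> snd p < snd q"
    obtain h1 y1 h2 y2 where pq': "p = (h1, y1)" "q = (h2, y2)" by (cases p, cases q)
    show "prel k p q" unfolding prel_def
      using r memPL pq pq' range_mod[of r0 h1 h2 k] by auto
  qed
  qed
  show ?thesis unfolding Inv_def E
    using perl pern ep LL0 r3 r4 pi sw unfolding E by auto
qed

theorem mainTheorem13:
  fixes n k :: nat and lam mu nu :: "int \<Rightarrow> int" and T :: "int \<times> int \<Rightarrow> 'a::linorder"
    and S :: "(int \<times> int) set" and r0 :: int
  assumes "1 \<le> k" and "k < n"
    and "cyl_tableau n k lam mu T"
    and "fullmulti_input n k mu S nu"
  shows "\<forall>m r. sorted (map snd (filter (\<lambda>e. fst e mod int k = r mod int k)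
            (removed ((fm_step n k ^^ m) (fm_init n k lam mu T S nu r0)))))"
proof (intro allI)
  fix m r
  have k: "0 < k" using assms(1) by simp
  have "Inv n k ((fm_step n k ^^ m) (fm_init n k lam mu T S nu r0))"
  proof (induction m)
    case 0 then show ?case using inv_init[OF k assms(3,4)] by simp
  next
    case (Suc m) then show ?case using inv_step[OF _ k] by simp
  qed
  then show "sorted (map snd (filter (\<lambda>e. fst e mod int k = r mod int k)
            (removed ((fm_step n k ^^ m) (fm_init n k lam mu T S nu r0)))))"
    unfolding Inv_def LLc_def by blast
qed

end
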